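(* Let $G$ be a finite simple graph with adjacency matrix $A$, let $x$ be a vertex of $G$, and let $X$ be the set of neighbours of $x$ in $G$ (assume $0<|X|<|V(G)|$). Let $G_X$ be the graph obtained from $G$ by Seidel switching with respect to $X$. Then $x$ is an isolated vertex of $G_X$. Moreover, $\mathrm{2\text{-}rank}(G_X)=\mathrm{2\text{-}rank}(G)-2$ if $\mathbf{1}\in\mathrm{Col}_2(G)$, and $\mathrm{2\text{-}rank}(G_X)=\mathrm{2\text{-}rank}(G)$ otherwise.
   Context: All graphs are finite, simple and undirected. The 2-rank of a graph $G$, written $\mathrm{2\text{-}rank}(G)$, is the rank over $\mathbb{F}_2$ of its adjacency matrix. $\mathrm{Col}_2(G)$ denotes the column space over $\mathbb{F}_2$ of the adjacency matrix of $G$, and $\mathbf{1}$ is the all-ones vector. For a vertex subset $X$ of a graph $G=(V,E)$, Seidel switching with respect to $X$ produces the graph on $V$ in which all edges between $X$ and $V\setminus X$ are removed and every non-edge between $X$ and $V\setminus X$ is made an edge, while edges with both ends in $X$ or both ends in $V\setminus X$ are unchanged. *)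

theory Defs
  imports "HOL-Analysis.Analysis" "HOL-Library.Z2"
begin

text \<open>A finite simple graph on the finite vertex type 'n: a symmetric, irreflexive
  adjacency relation E.\<close>
definition simple_graph :: "('n::finite \<Rightarrow> 'n \<Rightarrow> bool) \<Rightarrow> bool" where
  "simple_graph E \<longleftrightarrow> (\<forall>u v. E u v \<longleftrightarrow> E v u) \<and> (\<forall>u. \<not> E u u)"

text \<open>Adjacency matrix over F_2 (the field bit).\<close>
definition adj_matrix2 :: "('n::finite \<Rightarrow> 'n \<Rightarrow> bool) \<Rightarrow> bit ^'n ^'n" where
  "adj_matrix2 E = (\<chi> i j. if E i j then 1 else 0)"

definition rank2 :: "('n::finite \<Rightarrow> 'n \<Rightarrow> bool) \<Rightarrow> nat" where
  "rank2 E = rank (adj_matrix2 E)"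

text \<open>Column space over F_2 of the adjacency matrix.\<close>
definition Col2 :: "('n::finite \<Rightarrow> 'n \<Rightarrow> bool) \<Rightarrow> (bit ^'n) set" where
  "Col2 E = vec.span (columns (adj_matrix2 E))"

definition neighbours :: "('n \<Rightarrow> 'n \<Rightarrow> bool) \<Rightarrow> 'n \<Rightarrow> 'n set" where
  "neighbours E x = {y. E x y}"

text \<open>Seidel switching with respect to X: edges/non-edges between X and its complement
  are complemented, all other adjacencies kept.\<close>
definition seidel_switch :: "('n \<Rightarrow> 'n \<Rightarrow> bool) \<Rightarrow> 'n set \<Rightarrow> 'n \<Rightarrow> 'n \<Rightarrow> bool" where
  "seidel_switch E X u v = (if (u \<in> X) = (v \<in> X) then E u v else \<not> E u v)"

definition isolated :: "('n \<Rightarrow> 'n \<Rightarrow> bool) \<Rightarrow> 'n \<Rightarrow> bool" where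
  "isolated E x \<longleftrightarrow> (\<forall>y. \<not> E x y)"

end

theory Submission imports Defs begin

declare add_bit_eq_xor[simp del] mult_bit_eq_and[simp del]

lemma bit_add_self[simp]: "(b::bit) + b = 0"
proof -
  have "b + b = 2 * b" by (simp only: mult_2)
  then show ?thesis by simp
qed

definition dot :: "bit^'n \<Rightarrow> bit^'n \<Rightarrow> bit" where
  "dot a b = (\<Sum>j\<in>UNIV. a$j * b$j)"

lemma sym_dot:
  fixes M :: "bit^'n^'n"
  assumes "\<forall>i j. M$i$j = M$j$i"
  shows "dot a (M *v v) = dot (M *v a) v"
proof -
  have "dot a (M *v v) = (\<Sum>j\<in>UNIV. \<Sum>k\<in>UNIV. a$j * M$j$k * v$k)"
    by (simp add: dot_def matrix_vector_mult_def sum_distrib_left mult.assoc)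
  also have "\<dots> = (\<Sum>k\<in>UNIV. \<Sum>j\<in>UNIV. a$j * M$j$k * v$k)"
    by (rule sum.swap)
  also have "\<dots> = (\<Sum>k\<in>UNIV. \<Sum>j\<in>UNIV. a$j * M$k$j * v$k)"
    by (intro sum.cong refl, subst assms[rule_format], rule refl)
  also have "\<dots> = dot (M *v a) v"
    by (simp add: dot_def matrix_vector_mult_def sum_distrib_right sum_distrib_left mult_ac)
  finally show ?thesis .
qed

lemma quad_zero:
  fixes M :: "bit^'n^'n"
  assumes s: "\<forall>i j. M$i$j = M$j$i" and z: "\<forall>i. M$i$i = 0"
  shows "dot (M *v w) w = 0"
proof -
  define f where "f i j = M$i$j * w$i * w$j" for i j
  have fs: "f i j = f j i" for i j using s by (simp add: f_def mult_ac)
  have "finite S \<Longrightarrow> (\<Sum>i\<in>S. \<Sum>j\<in>S. f i j) = 0" for S :: "'n set"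
  proof (induction S rule: finite_induct)
    case empty then show ?case by simp
  next
    case (insert a S)
    have "(\<Sum>i\<in>insert a S. \<Sum>j\<in>insert a S. f i j)
       = (\<Sum>i\<in>S. \<Sum>j\<in>S. f i j) + ((\<Sum>i\<in>S. f i a) + (\<Sum>j\<in>S. f a j)) + f a a"
      using insert by (simp add: sum.insert sum.distrib algebra_simps)
    also have "(\<Sum>i\<in>S. f i a) = (\<Sum>j\<in>S. f a j)" using fs by simp
    finally show ?case using insert z by (simp add: f_def)
  qed
  then have "(\<Sum>i\<in>UNIV. \<Sum>j\<in>UNIV. f i j) = 0" by simp
  moreover have "dot (M *v w) w = (\<Sum>i\<in>UNIV. \<Sum>j\<in>UNIV. f i j)"
    by (simp add: dot_def f_def matrix_vector_mult_def sum_distrib_right sum_distrib_left mult_ac)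
  ultimately show ?thesis by simp
qed

lemma range_subspace: "vec.subspace (range ((*v) (M::bit^'n^'m)))"
  unfolding vec.subspace_def
proof (intro conjI ballI allI)
  show "0 \<in> range ((*v) M)" by (metis matrix_vector_mult_0_right rangeI)
  fix a b assume "a \<in> range ((*v) M)" "b \<in> range ((*v) M)"
  then obtain a' b' where "a = M *v a'" "b = M *v b'" by blast
  then have "a + b = M *v (a' + b')" by (simp add: matrix_vector_right_distrib)
  then show "a + b \<in> range ((*v) M)" by blast
next
  fix c a assume "a \<in> range ((*v) M)"
  then obtain a' where "a = M *v a'" by blast
  then have "c *s a = M *v (c *s a')" by (simp add: vec.scale)
  then show "c *s a \<in> range ((*v) M)" by blast
qed

lemma span_columns: "vec.span (columns (M::bit^'n^'m)) = range ((*v) M)"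
proof
  show "vec.span (columns M) \<subseteq> range ((*v) M)"
  proof (rule vec.span_minimal[OF _ range_subspace])
    show "columns M \<subseteq> range ((*v) M)"
    proof
      fix c assume "c \<in> columns M"
      then obtain i where "c = column i M" by (auto simp: columns_def)
      then have "c = M *v axis i 1"
        by (simp add: column_def matrix_vector_mult_def axis_def vec_eq_iff if_distrib sum.If_cases cong: if_cong)
      then show "c \<in> range ((*v) M)" by blast
    qed
  qed
  show "range ((*v) M) \<subseteq> vec.span (columns M)"
    using matrix_vector_mult_in_columnspace_gen by blast
qed

lemma vec_add_self[simp]: "(v::bit^'n) + v = 0"
  by (simp add: vec_eq_iff)

lemma mv_axis: "(M *v axis i 1) $ k = (M::bit^'n^'m) $ k $ i"
  by (simp add: matrix_vector_mult_def axis_def if_distrib sum.If_cases cong: if_cong)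

lemma dot_comm: "dot a b = dot b a"
  by (simp add: dot_def mult.commute)

lemma dot_add: "dot w (a + b) = dot w a + dot w b"
  by (simp add: dot_def sum.distrib distrib_left)

lemma dot_scale: "dot w (c *s a) = c * dot w a"
  by (simp add: dot_def sum_distrib_left mult_ac)

lemma dot_zero: "dot w 0 = 0"
  by (simp add: dot_def)

lemma dot_subspace: "vec.subspace {v. dot w v = 0}"
  unfolding vec.subspace_def by (simp add: dot_add dot_scale dot_zero)

lemma coord_subspace: "vec.subspace {v::bit^'n. v $ x = 0}"
  unfolding vec.subspace_def by simp

lemma fredholm:
  fixes M :: "bit^'n^'n"
  assumes symM: "\<forall>i j. M$i$j = M$j$i"
    and notin: "(\<chi> i. 1) \<notin> range ((*v) M)"
  shows "\<exists>v0. M *v v0 = 0 \<and> dot (\<chi> i. 1) v0 = 1"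
proof -
  define one :: "bit^'n" where "one = (\<chi> i. 1)"
  define C where "C = range ((*v) M)"
  obtain B where B: "B \<subseteq> C" "vec.independent B" "C \<subseteq> vec.span B"
    by (meson vec.basis_exists)
  have spB: "vec.span B \<subseteq> C"
    using B(1) range_subspace unfolding C_def by (meson vec.span_minimal)
  have "one \<notin> vec.span B" using spB notin unfolding one_def C_def by blast
  then have ind: "vec.independent (insert one B)"
    using B(2) by (simp add: vec.independent_insert)
  obtain g where g: "Vector_Spaces.linear (*s) (*s) g"
     "\<forall>z\<in>insert one B. g z = (if z = one then one else 0)"
    using vec.linear_independent_extend[OF ind, where f="\<lambda>z. if z = one then one else 0"] by blast
  have g0: "g z = 0" if "z \<in> C" for z
  proof -
    have "z \<in> vec.span B" using that B(3) by blast
    moreover have "\<forall>b\<in>B. g b = 0" using g(2) \<open>one \<notin> vec.span B\<close>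
      by (metis insert_iff vec.span_base)
    ultimately show ?thesis using vec.linear_eq_0_on_span[OF g(1)] by blast
  qed
  have g1: "g one = one" using g(2) by simp
  define N where "N = matrix g"
  have Nw: "N *v z = g z" for z unfolding N_def by (rule matrix_works[OF g(1)])
  fix x :: 'n
  define y where "y = (\<chi> j. N$x$j)"
  have "M *v y = 0"
    unfolding vec_eq_iff
  proof
    fix i
    have "(M *v y)$i = (\<Sum>j\<in>UNIV. M$i$j * N$x$j)"
      by (simp add: matrix_vector_mult_def y_def)
    also have "\<dots> = (\<Sum>j\<in>UNIV. N$x$j * (M *v axis i 1)$j)"
      using symM by (simp add: mv_axis mult.commute)
    also have "\<dots> = (N *v (M *v axis i 1))$x"
      by (simp add: matrix_vector_mult_def)
    also have "\<dots> = 0" using Nw g0 unfolding C_def by simp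
    finally show "(M *v y)$i = 0$i" by simp
  qed
  moreover have "dot one y = 1"
  proof -
    have "dot one y = (N *v one)$x"
      by (simp add: dot_def matrix_vector_mult_def y_def one_def mult.commute)
    also have "\<dots> = 1" using Nw g1 by (simp add: one_def)
    finally show ?thesis .
  qed
  ultimately show ?thesis unfolding one_def by blast
qed


lemma main_la:
  fixes M M' :: "bit^'n^'n" and x :: 'n and d one :: "bit^'n"
  assumes symM: "\<forall>i j. M$i$j = M$j$i" and diagM: "\<forall>i. M$i$i = 0"
    and symM': "\<forall>i j. M'$i$j = M'$j$i"
    and rowx: "\<forall>v. (M' *v v)$x = 0"
    and dd: "d = M *v axis x 1" and oo: "one = (\<chi> i. 1)"
    and eq: "\<forall>v. M' *v v = M *v v + dot one v *s d + dot d v *s one"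
  shows "(one \<in> range ((*v) M) \<longrightarrow> vec.dim (range ((*v) M')) + 2 = vec.dim (range ((*v) M)))
       \<and> (one \<notin> range ((*v) M) \<longrightarrow> vec.dim (range ((*v) M')) = vec.dim (range ((*v) M)))"
proof -
  define C where "C = range ((*v) M)"
  define C' where "C' = range ((*v) M')"
  define u :: "bit^'n" where "u = axis x 1"
  have dx: "d$x = 0" using diagM by (simp add: dd mv_axis)
  have onex: "one$x = 1" by (simp add: oo)
  have dC: "d \<in> C" unfolding C_def dd by blast
  have spC: "vec.span C = C" unfolding C_def using range_subspace by simp
  have eq2: "M *v v = M' *v v + dot one v *s d + dot d v *s one" for v
  proof -
    have "M' *v v + dot one v *s d + dot d v *s one
        = M *v v + (dot one v *s d + dot one v *s d) + (dot d v *s one + dot d v *s one)"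
      using eq by (simp add: algebra_simps)
    also have "\<dots> = M *v v" by simp
    finally show ?thesis by simp
  qed
  have S0: "vec.span (insert d C') \<subseteq> {v. v$x = 0}"
    using rowx dx coord_subspace unfolding C'_def
    by (intro vec.span_minimal) auto
  have one_notin: "one \<notin> vec.span (insert d C')" using S0 onex by auto
  have one_notin': "one \<notin> vec.span C'"
    using one_notin vec.span_mono[of C' "insert d C'"] by blast
  have sub1: "M *v v \<in> vec.span (insert one (insert d C'))" for v
    unfolding eq2[of v]
    by (intro vec.span_add vec.span_scale vec.span_base) (auto simp: C'_def)
  show ?thesis
  proof (intro conjI impI)
    assume "one \<in> range ((*v) M)"
    then obtain w where w: "M *v w = one" by blast
    have C'C: "C' \<subseteq> C"
    proof
      fix z assume "z \<in> C'"
      then obtain v where z: "z = M' *v v" unfolding C'_def by blast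
      have "z = M *v (v + dot one v *s u + dot d v *s w)"
        using z eq dd w by (simp add: u_def matrix_vector_right_distrib vec.scale)
      then show "z \<in> C" unfolding C_def by blast
    qed
    have ow: "dot one w = 0" using quad_zero[OF symM diagM, of w] w by simp
    have dw: "dot w d = 1"
    proof -
      have "dot w d = dot (M *v w) u" using sym_dot[OF symM] by (simp add: dd u_def)
      also have "\<dots> = 1" using w by (simp add: oo u_def dot_def axis_def if_distrib sum.If_cases cong: if_cong)
      finally show ?thesis .
    qed
    have M'w: "M' *v w = 0"
    proof -
      have "M' *v w = one + dot one w *s d + dot d w *s one" using eq w by simp
      also have "\<dots> = 0" using ow dw by (simp add: dot_comm)
      finally show ?thesis .
    qed
    have "C' \<subseteq> {v. dot w v = 0}"
    proof
      fix z assume "z \<in> C'"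
      then obtain v where z: "z = M' *v v" unfolding C'_def by blast
      have "dot w z = dot (M' *v w) v" using sym_dot[OF symM'] z by simp
      then show "z \<in> {v. dot w v = 0}" using M'w by (simp add: dot_def)
    qed
    then have "vec.span C' \<subseteq> {v. dot w v = 0}"
      using dot_subspace by (intro vec.span_minimal) auto
    then have d_notin: "d \<notin> vec.span C'" using dw by auto
    have dimT: "vec.dim (insert one (insert d C')) = vec.dim C' + 2"
      using one_notin d_notin by (simp add: vec.dim_insert)
    have "insert one (insert d C') \<subseteq> C" using C'C dC w unfolding C_def by blast
    then have le1: "vec.dim (insert one (insert d C')) \<le> vec.dim C" by (rule vec.dim_subset)
    have "C \<subseteq> vec.span (insert one (insert d C'))" using sub1 unfolding C_def by blast
    then have "vec.dim C \<le> vec.dim (vec.span (insert one (insert d C')))" by (rule vec.dim_subset)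
    then have le2: "vec.dim C \<le> vec.dim (insert one (insert d C'))" by simp
    show "vec.dim (range ((*v) M')) + 2 = vec.dim (range ((*v) M))"
      using le1 le2 dimT unfolding C_def C'_def by linarith
  next
    assume notin: "one \<notin> range ((*v) M)"
    obtain v0 where v0: "M *v v0 = 0" "dot one v0 = 1"
      using fredholm[OF symM] notin oo by blast
    have "dot d v0 = dot u (M *v v0)" using sym_dot[OF symM, of u v0] by (simp add: dd u_def dot_comm)
    then have dv0: "dot d v0 = 0" using v0 by (simp add: dot_def)
    have "M' *v v0 = d" using eq v0 dv0 by simp
    then have dC': "d \<in> C'" unfolding C'_def by (metis rangeI)
    have one_notinC: "one \<notin> vec.span C" unfolding spC using notin by (simp add: C_def)
    have "insert one C \<subseteq> vec.span (insert one C')"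
    proof
      fix z assume "z \<in> insert one C"
      then show "z \<in> vec.span (insert one C')"
      proof
        assume "z = one" then show ?thesis by (simp add: vec.span_base)
      next
        assume "z \<in> C"
        then obtain v where z: "z = M *v v" unfolding C_def by blast
        show ?thesis unfolding z eq2[of v] using dC'
          by (intro vec.span_add vec.span_scale vec.span_base) (auto simp: C'_def)
      qed
    qed
    then have "vec.dim (insert one C) \<le> vec.dim (vec.span (insert one C'))" by (rule vec.dim_subset)
    then have le1: "vec.dim C + 1 \<le> vec.dim C' + 1"
      using one_notinC one_notin' by (simp add: vec.dim_insert)
    have "insert one C' \<subseteq> vec.span (insert one C)"
    proof
      fix z assume "z \<in> insert one C'"
      then show "z \<in> vec.span (insert one C)"
      proof
        assume "z = one" then show ?thesis by (simp add: vec.span_base)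
      next
        assume "z \<in> C'"
        then obtain v where z: "z = M' *v v" unfolding C'_def by blast
        show ?thesis unfolding z eq[rule_format, of v] using dC
          by (intro vec.span_add vec.span_scale vec.span_base) (auto simp: C_def)
      qed
    qed
    then have "vec.dim (insert one C') \<le> vec.dim (vec.span (insert one C))" by (rule vec.dim_subset)
    then have le2: "vec.dim C' + 1 \<le> vec.dim C + 1"
      using one_notinC one_notin' by (simp add: vec.dim_insert)
    show "vec.dim (range ((*v) M')) = vec.dim (range ((*v) M))"
      using le1 le2 unfolding C_def C'_def by linarith
  qed
qed


lemma rank_sym:
  fixes A :: "bit^'n^'n"
  assumes "\<forall>i j. A$i$j = A$j$i"
  shows "rank A = vec.dim (range ((*v) A))"
proof -
  have "rows A = columns A"
    using assms unfolding rows_def columns_def row_def column_def by auto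
  then have "rank A = vec.dim (columns A)" by (simp add: row_rank_def_gen)
  also have "\<dots> = vec.dim (vec.span (columns A))" by simp
  also have "\<dots> = vec.dim (range ((*v) A))" by (simp add: span_columns)
  finally show ?thesis .
qed

theorem lemma2p1:
  fixes E :: "'n::finite \<Rightarrow> 'n \<Rightarrow> bool" and x :: 'n
  assumes "simple_graph E"
    and "0 < card (neighbours E x)"
    and "card (neighbours E x) < CARD('n)"
  shows "isolated (seidel_switch E (neighbours E x)) x
    \<and> (if ((\<chi> i. 1) :: bit ^'n) \<in> Col2 E
       then rank2 (seidel_switch E (neighbours E x)) = rank2 E - 2
       else rank2 (seidel_switch E (neighbours E x)) = rank2 E)"
proof -
  define X where "X = neighbours E x"
  define E' where "E' = seidel_switch E X"
  define A where "A = adj_matrix2 E"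
  define A' where "A' = adj_matrix2 E'"
  define one :: "bit^'n" where "one = (\<chi> i. 1)"
  define d where "d = A *v axis x 1"
  have symE: "E u v = E v u" for u v using assms(1) by (simp add: simple_graph_def)
  have irrE: "\<not> E u u" for u using assms(1) by (simp add: simple_graph_def)
  have iso: "isolated E' x"
    using irrE unfolding isolated_def E'_def seidel_switch_def X_def neighbours_def by auto
  have Aij: "A$i$j = (if E i j then 1 else 0)" for i j by (simp add: A_def adj_matrix2_def)
  have A'ij: "A'$i$j = (if E' i j then 1 else 0)" for i j by (simp add: A'_def adj_matrix2_def)
  have symA: "\<forall>i j. A$i$j = A$j$i" using symE by (simp add: Aij)
  have diagA: "\<forall>i. A$i$i = 0" using irrE by (simp add: Aij)
  have symA': "\<forall>i j. A'$i$j = A'$j$i"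
    using symE by (simp add: A'ij E'_def seidel_switch_def)
  have rowx: "\<forall>v. (A' *v v)$x = 0"
    using iso by (simp add: matrix_vector_mult_def A'ij isolated_def)
  have di: "d$i = (if E x i then 1 else 0)" for i
    using symE by (simp add: d_def mv_axis Aij)
  have entry: "A'$i$j = A$i$j + d$i + d$j" for i j
    by (cases "E i j"; cases "E x i"; cases "E x j")
       (simp_all add: A'ij Aij di E'_def seidel_switch_def X_def neighbours_def)
  have eq: "\<forall>v. A' *v v = A *v v + dot one v *s d + dot d v *s one"
  proof
    fix v
    show "A' *v v = A *v v + dot one v *s d + dot d v *s one"
      unfolding vec_eq_iff
    proof
      fix i
      have "(A' *v v)$i = (\<Sum>j\<in>UNIV. A$i$j * v$j + d$i * v$j + d$j * v$j)"
        by (simp add: matrix_vector_mult_def entry distrib_right)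
      also have "\<dots> = (A *v v)$i + (\<Sum>j\<in>UNIV. v$j) * d$i + (\<Sum>j\<in>UNIV. d$j * v$j)"
        by (simp add: sum.distrib matrix_vector_mult_def sum_distrib_right sum_distrib_left mult.commute)
      also have "\<dots> = (A *v v + dot one v *s d + dot d v *s one)$i"
        by (simp add: dot_def one_def)
      finally show "(A' *v v)$i = (A *v v + dot one v *s d + dot d v *s one)$i" .
    qed
  qed
  have main: "(one \<in> range ((*v) A) \<longrightarrow> vec.dim (range ((*v) A')) + 2 = vec.dim (range ((*v) A)))
       \<and> (one \<notin> range ((*v) A) \<longrightarrow> vec.dim (range ((*v) A')) = vec.dim (range ((*v) A)))"
    by (rule main_la[OF symA diagA symA' rowx d_def one_def eq])
  have r: "rank2 E = vec.dim (range ((*v) A))"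
    unfolding rank2_def A_def[symmetric] by (rule rank_sym[OF symA])
  have r': "rank2 E' = vec.dim (range ((*v) A'))"
    unfolding rank2_def A'_def[symmetric] by (rule rank_sym[OF symA'])
  have c: "Col2 E = range ((*v) A)"
    unfolding Col2_def A_def[symmetric] by (rule span_columns)
  show ?thesis
    using iso main r r' c unfolding E'_def X_def one_def by auto
qed

end
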